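(* If $Q_1,\dots,Q_n\in\mathbb{E}^d$ are affinely independent, then they have ideal general position and general position with respect to every real, additive gain graph $\Phi$ on $n$ vertices.
   Context: A real, additive gain graph $\Phi$ on $V=\{1,\dots,n\}$: finite graph with edge set $E$ (multiple edges allowed, every edge with two distinct endpoints) and gains $\phi(e;i,j)\in\mathbb{R}$ with $\phi(e;j,i)=-\phi(e;i,j)$. $S\subseteq E$ is balanced if every circle in $S$ has gain sum $0$; $c(S)$ counts components of $(V,S)$, isolated vertices included. With $\psi_{ij}(P)=d(P,Q_i)^2-d(P,Q_j)^2$, $\mathcal{H}(\Phi;\mathbf{Q})$ consists of hyperplanes $h(e)=\{P:\psi_{ij}(P)=\phi(e;i,j)\}$ for edges $e$ with endpoints $i,j$. $\mathcal{L}(\mathcal{H})$: nonempty intersections of subsets of $\mathcal{H}$ (including $\mathbb{E}^d$) ordered by reverse inclusion; $E(s)=\{e:h(e)\supseteq s\}$. Ideal general position: the points are distinct and, with $\mathbb{E}^d\subset\mathbb{P}^d$, $h_\infty$ the ideal hyperplane and $p_{ij}$ the ideal point of line $Q_iQ_j$, for every set $T$ of unordered pairs the projective span of $\{p_{ij}:\{i,j\}\in T\}$ has dimension $\min(n-c(T),d)-1$, $c(T)$ the number of components of $(\{1,\dots,n\},T)$. Balanced flat: balanced $S\subseteq E$ such that every $e\notin S$ with both endpoints in one component of $(V,S)$ makes $S\cup\{e\}$ unbalanced; rank $n-c(S)$. General position w.r.t. $\Phi$: $s\mapsto E(s)$ is a poset isomorphism from $\mathcal{L}(\mathcal{H}(\Phi;\mathbf{Q}))$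 onto the poset (by inclusion) of balanced flats of rank $\le d$. *)

theory Defs
  imports "HOL-Analysis.Analysis"
begin

text \<open>Number of connected components of the graph on vertex set V with
  (symmetrised) adjacency adj; isolated vertices count as components.\<close>
definition comp_rel :: "'v set \<Rightarrow> ('v \<Rightarrow> 'v \<Rightarrow> bool) \<Rightarrow> ('v \<times> 'v) set" where
  "comp_rel V adj = {(u,v). u \<in> V \<and> v \<in> V \<and> (adj u v \<or> adj v u)}\<^sup>*"

definition num_comp :: "'v set \<Rightarrow> ('v \<Rightarrow> 'v \<Rightarrow> bool) \<Rightarrow> nat" where
  "num_comp V adj = card (V // comp_rel V adj)"

text \<open>A gain graph on V = {1..n}: a finite edge set E (of an arbitrary type 'e, so
  multiple edges are allowed), a map ends giving each edge with a chosen orientation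
  (i,j) (i \<noteq> j), and phi e = phi(e;i,j) for ends e = (i,j); then phi(e;j,i) = - phi e.\<close>
definition gain_graph :: "nat \<Rightarrow> 'e set \<Rightarrow> ('e \<Rightarrow> nat \<times> nat) \<Rightarrow> bool" where
  "gain_graph n E ends \<longleftrightarrow> finite E \<and>
     (\<forall>e\<in>E. fst (ends e) \<in> {1..n} \<and> snd (ends e) \<in> {1..n} \<and> fst (ends e) \<noteq> snd (ends e))"

definition dgain :: "('e \<Rightarrow> nat \<times> nat) \<Rightarrow> ('e \<Rightarrow> real) \<Rightarrow> 'e \<Rightarrow> nat \<Rightarrow> nat \<Rightarrow> real" where
  "dgain ends phi e i j = (if ends e = (i,j) then phi e else - phi e)"

definition edge_adj :: "('e \<Rightarrow> nat \<times> nat) \<Rightarrow> 'e set \<Rightarrow> nat \<Rightarrow> nat \<Rightarrow> bool" where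
  "edge_adj ends S u v \<longleftrightarrow> (\<exists>e\<in>S. ends e = (u,v) \<or> ends e = (v,u))"

definition is_circle :: "('e \<Rightarrow> nat \<times> nat) \<Rightarrow> 'e set \<Rightarrow> 'e list \<Rightarrow> nat list \<Rightarrow> bool" where
  "is_circle ends S es vs \<longleftrightarrow> length es = length vs \<and> length es \<ge> 2 \<and>
     distinct es \<and> distinct vs \<and> set es \<subseteq> S \<and>
     (\<forall>m<length es. ends (es!m) = (vs!m, vs!((m+1) mod length es))
                   \<or> ends (es!m) = (vs!((m+1) mod length es), vs!m))"

definition circle_gain :: "('e \<Rightarrow> nat \<times> nat) \<Rightarrow> ('e \<Rightarrow> real) \<Rightarrow> 'e list \<Rightarrow> nat list \<Rightarrow> real" where
  "circle_gain ends phi es vs =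
     (\<Sum>m<length es. dgain ends phi (es!m) (vs!m) (vs!((m+1) mod length es)))"

definition balanced :: "('e \<Rightarrow> nat \<times> nat) \<Rightarrow> ('e \<Rightarrow> real) \<Rightarrow> 'e set \<Rightarrow> bool" where
  "balanced ends phi S \<longleftrightarrow>
     (\<forall>es vs. is_circle ends S es vs \<longrightarrow> circle_gain ends phi es vs = 0)"

definition balanced_flat :: "nat \<Rightarrow> 'e set \<Rightarrow> ('e \<Rightarrow> nat \<times> nat) \<Rightarrow> ('e \<Rightarrow> real) \<Rightarrow> 'e set \<Rightarrow> bool" where
  "balanced_flat n E ends phi S \<longleftrightarrow> S \<subseteq> E \<and> balanced ends phi S \<and>
     (\<forall>e\<in>E - S. (fst (ends e), snd (ends e)) \<in> comp_rel {1..n} (edge_adj ends S)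
                 \<longrightarrow> \<not> balanced ends phi (insert e S))"

definition flat_rank :: "nat \<Rightarrow> ('e \<Rightarrow> nat \<times> nat) \<Rightarrow> 'e set \<Rightarrow> nat" where
  "flat_rank n ends S = n - num_comp {1..n} (edge_adj ends S)"

definition gain_hyp :: "(nat \<Rightarrow> 'a::euclidean_space) \<Rightarrow> ('e \<Rightarrow> nat \<times> nat) \<Rightarrow> ('e \<Rightarrow> real) \<Rightarrow> 'e \<Rightarrow> 'a set" where
  "gain_hyp Q ends phi e =
     {P. (dist P (Q (fst (ends e))))\<^sup>2 - (dist P (Q (snd (ends e))))\<^sup>2 = phi e}"

text \<open>Intersection lattice L(H): nonempty intersections of subsets of H (empty subset gives the whole space).\<close>
definition int_lattice :: "(nat \<Rightarrow> 'a::euclidean_space) \<Rightarrow> 'e set \<Rightarrow> ('e \<Rightarrow> nat \<times> nat) \<Rightarrow> ('e \<Rightarrow> real) \<Rightarrow> 'a set set" where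
  "int_lattice Q E ends phi = {s. \<exists>A\<subseteq>E. s = (\<Inter>e\<in>A. gain_hyp Q ends phi e) \<and> s \<noteq> {}}"

definition edges_of :: "(nat \<Rightarrow> 'a::euclidean_space) \<Rightarrow> 'e set \<Rightarrow> ('e \<Rightarrow> nat \<times> nat) \<Rightarrow> ('e \<Rightarrow> real) \<Rightarrow> 'a set \<Rightarrow> 'e set" where
  "edges_of Q E ends phi s = {e\<in>E. s \<subseteq> gain_hyp Q ends phi e}"

text \<open>General position w.r.t. Phi: s \<mapsto> E(s) is a poset isomorphism from L(H) (reverse inclusion)
  onto the balanced flats of rank \<le> d (inclusion).\<close>
definition general_position_wrt :: "nat \<Rightarrow> (nat \<Rightarrow> 'a::euclidean_space) \<Rightarrow> 'e set \<Rightarrow> ('e \<Rightarrow> nat \<times> nat) \<Rightarrow> ('e \<Rightarrow> real) \<Rightarrow> bool" where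
  "general_position_wrt n Q E ends phi \<longleftrightarrow>
     bij_betw (edges_of Q E ends phi) (int_lattice Q E ends phi)
       {S. balanced_flat n E ends phi S \<and> flat_rank n ends S \<le> DIM('a)} \<and>
     (\<forall>s\<in>int_lattice Q E ends phi. \<forall>t\<in>int_lattice Q E ends phi.
        t \<subseteq> s \<longleftrightarrow> edges_of Q E ends phi s \<subseteq> edges_of Q E ends phi t)"

text \<open>The ideal point p_ij of line Q_iQ_j is the direction Q_i - Q_j; the projective span of a
  set of ideal points has projective dimension dim(linear span of the directions) - 1.
  So the condition dim = min(n - c(T), d) - 1 becomes dim (directions) = min(n - c(T), d).\<close>
definition unordered_pairs :: "nat \<Rightarrow> nat set set" where
  "unordered_pairs n = {{i,j} | i j. i \<in> {1..n} \<and> j \<in> {1..n} \<and> i \<noteq> j}"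

definition ideal_general_position :: "nat \<Rightarrow> (nat \<Rightarrow> 'a::euclidean_space) \<Rightarrow> bool" where
  "ideal_general_position n Q \<longleftrightarrow> inj_on Q {1..n} \<and>
     (\<forall>T\<subseteq>unordered_pairs n.
        dim {Q i - Q j | i j. {i,j} \<in> T} = min (n - num_comp {1..n} (\<lambda>u v. {u,v} \<in> T)) DIM('a))"

end

theory Submission
  imports Defs
begin

definition pot :: "('e \<Rightarrow> nat \<times> nat) \<Rightarrow> ('e \<Rightarrow> real) \<Rightarrow> 'e set \<Rightarrow> (nat \<Rightarrow> real) \<Rightarrow> bool" where
  "pot ends phi S x \<longleftrightarrow> (\<forall>e\<in>S. x (fst (ends e)) - x (snd (ends e)) = phi e)"

lemma dgain_pot:
  assumes "pot ends phi S x" "e \<in> S" "ends e = (a,b) \<or> ends e = (b,a)"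
  shows "dgain ends phi e a b = x a - x b"
  using assms unfolding pot_def dgain_def by (cases "ends e = (a,b)") force+

lemma cyc_tele:
  fixes f :: "nat \<Rightarrow> real"
  assumes "k > 0"
  shows "(\<Sum>m<k. f m - f ((m+1) mod k)) = 0"
proof -
  obtain k' where k: "k = Suc k'" using assms by (cases k) auto
  have "(\<Sum>m<k. f ((m+1) mod k)) = (\<Sum>m<k'. f ((m+1) mod k)) + f ((k'+1) mod k)"
    by (simp add: k)
  also have "(\<Sum>m<k'. f ((m+1) mod k)) = (\<Sum>m<k'. f (Suc m))"
    by (rule sum.cong) (auto simp: k)
  also have "f ((k'+1) mod k) = f 0" by (simp add: k)
  also have "(\<Sum>m<k'. f (Suc m)) + f 0 = (\<Sum>m<k. f m)"
    unfolding k sum.lessThan_Suc_shift by simp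
  finally show ?thesis by (simp add: sum_subtractf)
qed

lemma pot_balanced:
  assumes "pot ends phi S x"
  shows "balanced ends phi S"
  unfolding balanced_def
proof (intro allI impI)
  fix es vs assume c: "is_circle ends S es vs"
  let ?k = "length es"
  have "circle_gain ends phi es vs = (\<Sum>m<?k. x (vs!m) - x (vs!((m+1) mod ?k)))"
    unfolding circle_gain_def
  proof (rule sum.cong)
    fix m assume "m \<in> {..<?k}"
    then have "m < ?k" by simp
    moreover have "es!m \<in> S" using c \<open>m < ?k\<close> unfolding is_circle_def by auto
    ultimately show "dgain ends phi (es!m) (vs!m) (vs!((m+1) mod ?k)) = x (vs!m) - x (vs!((m+1) mod ?k))"
      using c assms dgain_pot unfolding is_circle_def by metis
  qed simp
  also have "\<dots> = 0" using cyc_tele[of ?k "\<lambda>m. x (vs!m)"] c unfolding is_circle_def by force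
  finally show "circle_gain ends phi es vs = 0" .
qed

lemma is_circle_mono: "is_circle ends S es vs \<Longrightarrow> S \<subseteq> T \<Longrightarrow> is_circle ends T es vs"
  unfolding is_circle_def by auto

lemma balanced_mono: "balanced ends phi T \<Longrightarrow> S \<subseteq> T \<Longrightarrow> balanced ends phi S"
  unfolding balanced_def using is_circle_mono by blast

lemma comp_rel_sym: "sym (comp_rel V adj)"
  unfolding comp_rel_def by (rule sym_rtrancl) (auto simp: sym_def)

lemma comp_rel_trans: "trans (comp_rel V adj)"
  unfolding comp_rel_def by (rule trans_rtrancl)

definition is_path :: "('e \<Rightarrow> nat \<times> nat) \<Rightarrow> 'e set \<Rightarrow> 'e list \<Rightarrow> nat list \<Rightarrow> bool" where
  "is_path ends S es vs \<longleftrightarrow> length vs = Suc (length es) \<and> distinct vs \<and> set es \<subseteq> S \<and>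
     (\<forall>m<length es. ends (es!m) = (vs!m, vs!(Suc m)) \<or> ends (es!m) = (vs!(Suc m), vs!m))"

lemma path_exists:
  assumes "(u,v) \<in> comp_rel V (edge_adj ends S)"
  shows "\<exists>es vs. is_path ends S es vs \<and> vs!0 = u \<and> vs!(length es) = v"
  using assms unfolding comp_rel_def
proof (induction rule: rtrancl_induct)
  case base
  show ?case by (rule exI[of _ "[]"], rule exI[of _ "[u]"]) (simp add: is_path_def)
next
  case (step w z)
  then obtain es vs where p: "is_path ends S es vs" "vs!0 = u" "vs!(length es) = w" by blast
  from step(2) obtain e where e: "e \<in> S" "ends e = (w,z) \<or> ends e = (z,w)"
    unfolding edge_adj_def by auto
  show ?case
  proof (cases "z \<in> set vs")
    case True
    then obtain p where pp: "p < length vs" "vs!p = z" by (metis in_set_conv_nth)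
    have pl: "p \<le> length es" using pp p(1) unfolding is_path_def by simp
    have "is_path ends S (take p es) (take (Suc p) vs)"
      using p(1) pp pl unfolding is_path_def
      by (auto simp: min_def dest: in_set_takeD)
    moreover have "(take (Suc p) vs)!0 = u" using p by simp
    moreover have "(take (Suc p) vs)!(length (take p es)) = z" using pp pl by (simp add: min_def)
    ultimately show ?thesis by blast
  next
    case False
    have len: "length vs = Suc (length es)" using p(1) unfolding is_path_def by simp
    have "is_path ends S (es@[e]) (vs@[z])"
      unfolding is_path_def
    proof (intro conjI allI impI)
      show "length (vs @ [z]) = Suc (length (es @ [e]))" using len by simp
      show "distinct (vs @ [z])" using p(1) False unfolding is_path_def by simp
      show "set (es @ [e]) \<subseteq> S" using p(1) e unfolding is_path_def by simp
    next
      fix m assume m: "m < length (es @ [e])"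
      show "ends ((es @ [e]) ! m) = ((vs @ [z]) ! m, (vs @ [z]) ! Suc m) \<or>
            ends ((es @ [e]) ! m) = ((vs @ [z]) ! Suc m, (vs @ [z]) ! m)"
      proof (cases "m < length es")
        case True
        then show ?thesis using p(1) len unfolding is_path_def by (simp add: nth_append)
      next
        case False
        then have "m = length es" using m by simp
        then show ?thesis using e p(3) len by (simp add: nth_append)
      qed
    qed
    moreover have "(vs@[z])!0 = u" using p(2) len by (simp add: nth_append)
    moreover have "(vs@[z])!(length (es@[e])) = z" using len by (simp add: nth_append)
    ultimately show ?thesis by blast
  qed
qed

lemma path_tele:
  assumes "is_path ends S es vs" "pot ends phi S x"
  shows "(\<Sum>m<length es. dgain ends phi (es!m) (vs!m) (vs!(Suc m))) = x (vs!0) - x (vs!(length es))"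
proof -
  have "(\<Sum>m<length es. dgain ends phi (es!m) (vs!m) (vs!(Suc m))) = (\<Sum>m<length es. x (vs!m) - x (vs!(Suc m)))"
  proof (rule sum.cong)
    fix m assume "m \<in> {..<length es}"
    then show "dgain ends phi (es!m) (vs!m) (vs!(Suc m)) = x (vs!m) - x (vs!(Suc m))"
      using assms dgain_pot unfolding is_path_def by (metis lessThan_iff nth_mem subsetD)
  qed simp
  also have "\<dots> = x (vs!0) - x (vs!(length es))" by (rule sum_lessThan_telescope')
  finally show ?thesis .
qed

lemma path_distinct_edges:
  assumes "is_path ends S es vs"
  shows "distinct es"
proof -
  have len: "length vs = Suc (length es)" and dv: "distinct vs"
    and ed: "\<forall>m<length es. ends (es!m) = (vs!m, vs!(Suc m)) \<or> ends (es!m) = (vs!(Suc m), vs!m)"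
    using assms unfolding is_path_def by auto
  show ?thesis unfolding distinct_conv_nth
  proof (intro allI impI)
    fix a b assume ab: "a < length es" "b < length es" "a \<noteq> b"
    show "es!a \<noteq> es!b"
    proof
      assume eq: "es!a = es!b"
      have "vs!a = vs!b \<or> vs!a = vs!(Suc b)"
        using ed ab eq by (metis Pair_inject)
      moreover have "vs!(Suc a) = vs!b \<or> vs!(Suc a) = vs!(Suc b)"
        using ed ab eq by (metis Pair_inject)
      ultimately show False
        using dv ab len by (simp add: nth_eq_iff_index_eq)
    qed
  qed
qed

lemma close_circle:
  assumes p: "is_path ends S es vs" and v0: "vs!0 = j" and vk: "vs!(length es) = i"
    and ij: "i \<noteq> j" and eS: "e \<notin> S" and ee: "ends e = (i,j)"
    and x: "pot ends phi S x" and bal: "balanced ends phi (insert e S)"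
  shows "phi e = x i - x j"
proof -
  let ?k = "length es"
  have len: "length vs = Suc ?k" and dv: "distinct vs" and sS: "set es \<subseteq> S"
    and ed: "\<forall>m<?k. ends (es!m) = (vs!m, vs!(Suc m)) \<or> ends (es!m) = (vs!(Suc m), vs!m)"
    using p unfolding is_path_def by auto
  have k1: "?k \<ge> 1" using v0 vk ij by (cases "?k") auto
  have circ: "is_circle ends (insert e S) (es@[e]) vs"
    unfolding is_circle_def
  proof (intro conjI allI impI)
    show "length (es @ [e]) = length vs" using len by simp
    show "2 \<le> length (es @ [e])" using k1 by simp
    show "distinct (es @ [e])" using path_distinct_edges[OF p] eS sS by auto
    show "distinct vs" by (rule dv)
    show "set (es @ [e]) \<subseteq> insert e S" using sS by auto
  next
    fix m assume m: "m < length (es @ [e])"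
    show "ends ((es @ [e]) ! m) = (vs ! m, vs ! ((m + 1) mod length (es @ [e]))) \<or>
          ends ((es @ [e]) ! m) = (vs ! ((m + 1) mod length (es @ [e])), vs ! m)"
    proof (cases "m < ?k")
      case True
      then show ?thesis using ed by (simp add: nth_append)
    next
      case False
      then have "m = ?k" using m by simp
      then show ?thesis using ee v0 vk by (simp add: nth_append)
    qed
  qed
  have "0 = circle_gain ends phi (es@[e]) vs" using bal circ unfolding balanced_def by auto
  also have "\<dots> = (\<Sum>m<Suc ?k. dgain ends phi ((es@[e])!m) (vs!m) (vs!((m+1) mod Suc ?k)))"
    unfolding circle_gain_def by simp
  also have "\<dots> = (\<Sum>m<?k. dgain ends phi ((es@[e])!m) (vs!m) (vs!((m+1) mod Suc ?k)))
                  + dgain ends phi e (vs!?k) (vs!0)"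
    by (simp add: nth_append)
  also have "(\<Sum>m<?k. dgain ends phi ((es@[e])!m) (vs!m) (vs!((m+1) mod Suc ?k)))
           = (\<Sum>m<?k. dgain ends phi (es!m) (vs!m) (vs!(Suc m)))"
    by (rule sum.cong) (auto simp: nth_append)
  also have "\<dots> = x j - x i" using path_tele[OF p x] v0 vk by simp
  also have "dgain ends phi e (vs!?k) (vs!0) = phi e" using ee v0 vk by (simp add: dgain_def)
  finally show ?thesis by simp
qed

definition compo :: "nat set \<Rightarrow> ('e \<Rightarrow> nat \<times> nat) \<Rightarrow> 'e set \<Rightarrow> nat \<Rightarrow> nat set" where
  "compo V ends S i = {v. (i,v) \<in> comp_rel V (edge_adj ends S)}"

lemma edge_in_comp_rel:
  assumes "e \<in> S" "ends e = (a,b)" "a \<in> V" "b \<in> V"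
  shows "(a, b) \<in> comp_rel V (edge_adj ends S)"
proof -
  have "edge_adj ends S a b"
    unfolding edge_adj_def by (rule bexI[of _ e]) (simp_all add: assms(1,2))
  then show ?thesis using assms(3,4) unfolding comp_rel_def by (intro r_into_rtrancl) simp
qed

lemma pot_shift:
  assumes x: "pot ends phi S x" and V: "\<forall>e\<in>S. fst (ends e) \<in> V \<and> snd (ends e) \<in> V"
  shows "pot ends phi S (\<lambda>v. x v + (if v \<in> compo V ends S i then c else 0))"
  unfolding pot_def
proof
  fix e assume e: "e \<in> S"
  obtain a b where ab: "ends e = (a,b)" by fastforce
  have abV: "a \<in> V" "b \<in> V" using V e ab by force+
  have r: "(a, b) \<in> comp_rel V (edge_adj ends S)" using edge_in_comp_rel[of e S ends a b V] e ab abV by blast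
  have r': "(b, a) \<in> comp_rel V (edge_adj ends S)" by (rule symD[OF comp_rel_sym r])
  have t: "trans (comp_rel V (edge_adj ends S))" by (rule comp_rel_trans)
  have iff: "(a \<in> compo V ends S i) = (b \<in> compo V ends S i)"
    unfolding compo_def mem_Collect_eq using transD[OF t _ r] transD[OF t _ r'] by blast
  have xe: "x a - x b = phi e" using x e ab unfolding pot_def by force
  show "x (fst (ends e)) + (if fst (ends e) \<in> compo V ends S i then c else 0) -
        (x (snd (ends e)) + (if snd (ends e) \<in> compo V ends S i then c else 0)) = phi e"
    unfolding ab fst_conv snd_conv using iff xe by (cases "a \<in> compo V ends S i") simp_all
qed

lemma balanced_pot:
  assumes g: "gain_graph n E ends" and S: "S \<subseteq> E" and bal: "balanced ends phi S"
  shows "\<exists>x. pot ends phi S x"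
proof -
  have "finite S" using g S unfolding gain_graph_def by (auto intro: finite_subset)
  from this S bal show ?thesis
  proof (induction S rule: finite_induct)
    case empty
    then show ?case by (auto simp: pot_def)
  next
    case (insert e F)
    let ?V = "{1..n}"
    let ?R = "comp_rel ?V (edge_adj ends F)"
    obtain x where x: "pot ends phi F x"
      using insert balanced_mono[of ends phi "insert e F" F] by auto
    have FV: "\<forall>e\<in>F. fst (ends e) \<in> ?V \<and> snd (ends e) \<in> ?V"
      using insert.prems g unfolding gain_graph_def by blast
    define i where "i = fst (ends e)"
    define j where "j = snd (ends e)"
    have eE: "e \<in> E" using insert.prems by auto
    have ij: "i \<noteq> j" "i \<in> ?V" "j \<in> ?V" using g eE unfolding gain_graph_def i_def j_def by auto
    have ee: "ends e = (i,j)" unfolding i_def j_def by simp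
    show ?case
    proof (cases "(i,j) \<in> ?R")
      case True
      then have "(j,i) \<in> ?R" by (rule symD[OF comp_rel_sym])
      then obtain es vs where p: "is_path ends F es vs" "vs!0 = j" "vs!(length es) = i"
        using path_exists by blast
      have "phi e = x i - x j"
        using close_circle[OF p ij(1) insert.hyps(2) ee x] insert.prems by simp
      then have "pot ends phi (insert e F) x" using x ee unfolding pot_def by auto
      then show ?thesis by blast
    next
      case False
      define c where "c = phi e - (x i - x j)"
      define x' where "x' = (\<lambda>v. x v + (if v \<in> compo ?V ends F i then c else 0))"
      have x': "pot ends phi F x'" unfolding x'_def by (rule pot_shift[OF x FV])
      have "i \<in> compo ?V ends F i" unfolding compo_def comp_rel_def by simp
      moreover have "j \<notin> compo ?V ends F i" using False unfolding compo_def by simp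
      ultimately have "x' i - x' j = phi e" unfolding x'_def c_def by simp
      then have "pot ends phi (insert e F) x'" using x' ee unfolding pot_def by auto
      then show ?thesis by blast
    qed
  qed
qed

lemma pot_comp_eq:
  assumes x: "pot ends phi S x" and y: "pot ends phi S y"
    and uv: "(u,v) \<in> comp_rel V (edge_adj ends S)"
  shows "x u - x v = y u - y v"
  using uv unfolding comp_rel_def
proof (induction rule: rtrancl_induct)
  case base
  then show ?case by simp
next
  case (step w z)
  from step(2) obtain e where e: "e \<in> S" "ends e = (w,z) \<or> ends e = (z,w)"
    unfolding edge_adj_def by auto
  have "x w - x z = y w - y z"
    using e(2)
  proof
    assume "ends e = (w,z)" then show ?thesis using e(1) x y unfolding pot_def by force
  next
    assume "ends e = (z,w)"
    then have "x z - x w = y z - y w" using e(1) x y unfolding pot_def by force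
    then show ?thesis by simp
  qed
  then show ?case using step(3) by simp
qed

lemma dual_exists:
  fixes B :: "'a::euclidean_space set"
  assumes "independent B"
  shows "\<exists>P. \<forall>w\<in>B. P \<bullet> w = b w"
proof -
  obtain g where g: "linear g" "\<forall>x\<in>B. g x = b x"
    using linear_independent_extend[OF assms] by blast
  define P where "P = (\<Sum>c\<in>Basis. g c *\<^sub>R c)"
  have "P \<bullet> x = g x" for x
  proof -
    have "g x = g (\<Sum>c\<in>Basis. (x \<bullet> c) *\<^sub>R c)" by (simp add: euclidean_representation)
    also have "\<dots> = (\<Sum>c\<in>Basis. (x \<bullet> c) * g c)" using g(1)
      by (simp add: linear_sum linear_scale)
    also have "\<dots> = P \<bullet> x" unfolding P_def by (simp add: inner_sum_right inner_commute mult.commute)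
    finally show ?thesis by simp
  qed
  thus ?thesis using g by (intro exI[of _ P]) auto
qed

lemma lin_sol:
  fixes Q :: "nat \<Rightarrow> 'a::euclidean_space"
  assumes inj: "inj_on Q V" and ai: "\<not> affine_dependent (Q ` V)" and a: "a \<in> V"
  shows "\<exists>P. \<forall>i\<in>V. P \<bullet> (Q i - Q a) = y i - y a"
proof -
  define B where "B = (\<lambda>x. - Q a + x) ` (Q ` V - {Q a})"
  have "independent B" using ai affine_dependent_iff_dependent2[of "Q a" "Q ` V"] a
    unfolding B_def by auto
  then obtain P where P: "\<forall>w\<in>B. P \<bullet> w = y (inv_into V Q (w + Q a)) - y a"
    using dual_exists[OF \<open>independent B\<close>, of "\<lambda>w. y (inv_into V Q (w + Q a)) - y a"] by blast
  have "P \<bullet> (Q i - Q a) = y i - y a" if i: "i \<in> V" for i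
  proof (cases "i = a")
    case True then show ?thesis by simp
  next
    case False
    then have "Q i \<noteq> Q a" using inj i a by (auto dest: inj_onD)
    then have "- Q a + Q i \<in> B" unfolding B_def using i by auto
    then have "P \<bullet> (- Q a + Q i) = y (inv_into V Q (- Q a + Q i + Q a)) - y a" using P by blast
    also have "inv_into V Q (- Q a + Q i + Q a) = i" using inv_into_f_f[OF inj i] by simp
    finally show ?thesis by (simp add: algebra_simps)
  qed
  then show ?thesis by blast
qed

lemma sqd_sol:
  fixes Q :: "nat \<Rightarrow> 'a::euclidean_space"
  assumes inj: "inj_on Q V" and ai: "\<not> affine_dependent (Q ` V)" and a: "a \<in> V"
  shows "\<exists>P. \<forall>i\<in>V. (dist P (Q i))\<^sup>2 - y i = (dist P (Q a))\<^sup>2 - y a"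
proof -
  obtain P where P: "\<forall>i\<in>V. P \<bullet> (Q i - Q a) = (Q i \<bullet> Q i - y i)/2 - (Q a \<bullet> Q a - y a)/2"
    using lin_sol[OF inj ai a, of "\<lambda>i. (Q i \<bullet> Q i - y i)/2"] by blast
  have d: "(dist P q)\<^sup>2 = P \<bullet> P - 2 * (P \<bullet> q) + q \<bullet> q" for q
    by (simp add: dist_norm power2_norm_eq_inner inner_diff_left inner_diff_right inner_commute)
  have "(dist P (Q i))\<^sup>2 - y i = (dist P (Q a))\<^sup>2 - y a" if "i \<in> V" for i
  proof -
    have h: "P \<bullet> Q i - P \<bullet> Q a = (Q i \<bullet> Q i - y i)/2 - (Q a \<bullet> Q a - y a)/2"
      using P that by (simp add: inner_diff_right)
    have h2: "2 * (P \<bullet> Q i) - 2 * (P \<bullet> Q a) = (Q i \<bullet> Q i - y i) - (Q a \<bullet> Q a - y a)"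
      using h by (simp add: field_simps)
    show ?thesis unfolding d using h2 by (simp add: algebra_simps)
  qed
  then show ?thesis by blast
qed

lemma mem_hyps:
  "P \<in> (\<Inter>e\<in>A. gain_hyp Q ends phi e) \<longleftrightarrow> pot ends phi A (\<lambda>i. (dist P (Q i))\<^sup>2)"
  unfolding gain_hyp_def pot_def by auto

lemma pot_mono: "pot ends phi T x \<Longrightarrow> S \<subseteq> T \<Longrightarrow> pot ends phi S x"
  unfolding pot_def by auto

lemma lattice_repr:
  assumes "s \<in> int_lattice Q E ends phi"
  shows "s = (\<Inter>e\<in>edges_of Q E ends phi s. gain_hyp Q ends phi e)"
proof -
  obtain A where A: "A \<subseteq> E" "s = (\<Inter>e\<in>A. gain_hyp Q ends phi e)"
    using assms unfolding int_lattice_def by blast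
  have "A \<subseteq> edges_of Q E ends phi s" using A unfolding edges_of_def by auto
  then have "(\<Inter>e\<in>edges_of Q E ends phi s. gain_hyp Q ends phi e) \<subseteq> s" using A(2) by auto
  moreover have "s \<subseteq> (\<Inter>e\<in>edges_of Q E ends phi s. gain_hyp Q ends phi e)"
    unfolding edges_of_def by auto
  ultimately show ?thesis by blast
qed

lemma quotient_image: "V // R = (\<lambda>x. R``{x}) ` V"
  unfolding quotient_def by auto

lemma num_comp_le: "finite V \<Longrightarrow> num_comp V adj \<le> card V"
  unfolding num_comp_def quotient_image by (rule card_image_le)

lemma num_comp_ge1: "finite V \<Longrightarrow> V \<noteq> {} \<Longrightarrow> num_comp V adj \<ge> 1"
  unfolding num_comp_def quotient_image by (simp add: Suc_le_eq card_gt_0_iff)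

lemma n_bound:
  fixes Q :: "nat \<Rightarrow> 'a::euclidean_space"
  assumes inj: "inj_on Q {1..n}" and ai: "\<not> affine_dependent (Q ` {1..n})"
  shows "n \<le> DIM('a) + 1"
proof (cases "n = 0")
  case True then show ?thesis by simp
next
  case False
  then have a: "Q 1 \<in> Q ` {1..n}" by auto
  have "n = card (Q ` {1..n})" using card_image[OF inj] by simp
  also have "\<dots> = dim ((\<lambda>x. x - Q 1) ` (Q ` {1..n})) + 1"
    by (rule affine_independent_card_dim_diffs[OF ai a])
  also have "\<dots> \<le> DIM('a) + 1" using dim_subset_UNIV by simp
  finally show ?thesis .
qed

lemma rank_le:
  fixes Q :: "nat \<Rightarrow> 'a::euclidean_space"
  assumes inj: "inj_on Q {1..n}" and ai: "\<not> affine_dependent (Q ` {1..n})"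
  shows "n - num_comp {1..n} adj \<le> DIM('a)"
proof (cases "n = 0")
  case True then show ?thesis by simp
next
  case False
  then have "num_comp {1..n} adj \<ge> 1" by (intro num_comp_ge1) auto
  then show ?thesis using n_bound[OF inj ai] by simp
qed

lemma realize:
  fixes Q :: "nat \<Rightarrow> 'a::euclidean_space"
  assumes inj: "inj_on Q {1..n}" and ai: "\<not> affine_dependent (Q ` {1..n})"
    and g: "gain_graph n E ends" and S: "S \<subseteq> E" and y: "pot ends phi S y"
  shows "\<exists>P. pot ends phi S (\<lambda>i. (dist P (Q i))\<^sup>2) \<and>
             (\<forall>i\<in>{1..n}. \<forall>j\<in>{1..n}. (dist P (Q i))\<^sup>2 - (dist P (Q j))\<^sup>2 = y i - y j)"
proof -
  have "\<exists>P. \<forall>i\<in>{1..n}. \<forall>j\<in>{1..n}. (dist P (Q i))\<^sup>2 - (dist P (Q j))\<^sup>2 = y i - y j"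
  proof (cases "n = 0")
    case True then show ?thesis by simp
  next
    case False
    then have a: "1 \<in> {1..n}" by simp
    obtain P where P: "\<forall>i\<in>{1..n}. (dist P (Q i))\<^sup>2 - y i = (dist P (Q 1))\<^sup>2 - y 1"
      using sqd_sol[OF inj ai a, of y] by blast
    have "\<forall>i\<in>{1..n}. \<forall>j\<in>{1..n}. (dist P (Q i))\<^sup>2 - (dist P (Q j))\<^sup>2 = y i - y j"
    proof (intro ballI)
      fix i j assume ij: "i \<in> {1..n}" "j \<in> {1..n}"
      have "(dist P (Q i))\<^sup>2 - y i = (dist P (Q 1))\<^sup>2 - y 1"
        "(dist P (Q j))\<^sup>2 - y j = (dist P (Q 1))\<^sup>2 - y 1" using bspec[OF P ij(1)] bspec[OF P ij(2)] by - 
      then show "(dist P (Q i))\<^sup>2 - (dist P (Q j))\<^sup>2 = y i - y j" by linarith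
    qed
    then show ?thesis by (rule exI)
  qed
  then obtain P where P: "\<forall>i\<in>{1..n}. \<forall>j\<in>{1..n}. (dist P (Q i))\<^sup>2 - (dist P (Q j))\<^sup>2 = y i - y j"
    by blast
  have "pot ends phi S (\<lambda>i. (dist P (Q i))\<^sup>2)"
    unfolding pot_def
  proof
    fix e assume e: "e \<in> S"
    then have "fst (ends e) \<in> {1..n}" "snd (ends e) \<in> {1..n}"
      using S g unfolding gain_graph_def by auto
    then show "(dist P (Q (fst (ends e))))\<^sup>2 - (dist P (Q (snd (ends e))))\<^sup>2 = phi e"
    proof -
      have "(dist P (Q (fst (ends e))))\<^sup>2 - (dist P (Q (snd (ends e))))\<^sup>2 = y (fst (ends e)) - y (snd (ends e))"
        using bspec[OF bspec[OF P \<open>fst (ends e) \<in> {1..n}\<close>] \<open>snd (ends e) \<in> {1..n}\<close>] .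
      also have "\<dots> = phi e" using y e unfolding pot_def by simp
      finally show ?thesis .
    qed
  qed
  then show ?thesis using P by (intro exI[of _ P]) simp
qed

lemma flat_of_s:
  fixes Q :: "nat \<Rightarrow> 'a::euclidean_space"
  assumes g: "gain_graph n E ends" and s: "s \<in> int_lattice Q E ends phi"
  shows "balanced_flat n E ends phi (edges_of Q E ends phi s)"
proof -
  let ?ES = "edges_of Q E ends phi s"
  obtain P0 where P0: "P0 \<in> s" using s unfolding int_lattice_def by blast
  have potP: "pot ends phi ?ES (\<lambda>i. (dist P (Q i))\<^sup>2)" if "P \<in> s" for P
    using that unfolding pot_def edges_of_def gain_hyp_def by auto
  have sub: "?ES \<subseteq> E" unfolding edges_of_def by auto
  have bal: "balanced ends phi ?ES" using pot_balanced[OF potP[OF P0]] .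
  have cl: "\<not> balanced ends phi (insert e ?ES)"
    if e: "e \<in> E - ?ES" and c: "(fst (ends e), snd (ends e)) \<in> comp_rel {1..n} (edge_adj ends ?ES)" for e
  proof
    assume b: "balanced ends phi (insert e ?ES)"
    obtain y where y: "pot ends phi (insert e ?ES) y"
      using balanced_pot[OF g _ b] e sub by auto
    have "s \<subseteq> gain_hyp Q ends phi e"
    proof
      fix P assume P: "P \<in> s"
      have "(dist P (Q (fst (ends e))))\<^sup>2 - (dist P (Q (snd (ends e))))\<^sup>2
            = y (fst (ends e)) - y (snd (ends e))"
        using pot_comp_eq[OF potP[OF P] pot_mono[OF y] c] by auto
      also have "\<dots> = phi e" using y unfolding pot_def by auto
      finally show "P \<in> gain_hyp Q ends phi e" unfolding gain_hyp_def by simp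
    qed
    then have "e \<in> ?ES" using e unfolding edges_of_def by auto
    then show False using e by auto
  qed
  show ?thesis unfolding balanced_flat_def using sub bal cl by blast
qed

lemma s_of_flat:
  fixes Q :: "nat \<Rightarrow> 'a::euclidean_space"
  assumes inj: "inj_on Q {1..n}" and ai: "\<not> affine_dependent (Q ` {1..n})"
    and g: "gain_graph n E ends" and S: "balanced_flat n E ends phi S"
  shows "(\<Inter>e\<in>S. gain_hyp Q ends phi e) \<in> int_lattice Q E ends phi \<and>
         edges_of Q E ends phi (\<Inter>e\<in>S. gain_hyp Q ends phi e) = S"
proof -
  let ?s = "\<Inter>e\<in>S. gain_hyp Q ends phi e"
  have SE: "S \<subseteq> E" and bal: "balanced ends phi S"
    and fl: "\<forall>e\<in>E - S. (fst (ends e), snd (ends e)) \<in> comp_rel {1..n} (edge_adj ends S)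
                 \<longrightarrow> \<not> balanced ends phi (insert e S)"
    using S unfolding balanced_flat_def by auto
  obtain y where y: "pot ends phi S y" using balanced_pot[OF g SE bal] by blast
  obtain P where P: "pot ends phi S (\<lambda>i. (dist P (Q i))\<^sup>2)"
    "\<forall>i\<in>{1..n}. \<forall>j\<in>{1..n}. (dist P (Q i))\<^sup>2 - (dist P (Q j))\<^sup>2 = y i - y j"
    using realize[OF inj ai g SE y] by blast
  have Ps: "P \<in> ?s" using mem_hyps[of P Q ends phi S] P(1) by simp
  have L: "?s \<in> int_lattice Q E ends phi" unfolding int_lattice_def using SE Ps by (intro CollectI exI[of _ S]) auto
  have "edges_of Q E ends phi ?s \<subseteq> S"
  proof
    fix e assume e: "e \<in> edges_of Q E ends phi ?s"
    then have eE: "e \<in> E" and sh: "?s \<subseteq> gain_hyp Q ends phi e" unfolding edges_of_def by auto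
    show "e \<in> S"
    proof (rule ccontr)
      assume eS: "e \<notin> S"
      define i where "i = fst (ends e)"
      define j where "j = snd (ends e)"
      have ij: "i \<in> {1..n}" "j \<in> {1..n}" using g eE unfolding gain_graph_def i_def j_def by auto
      have he: "(dist P' (Q i))\<^sup>2 - (dist P' (Q j))\<^sup>2 = phi e" if "P' \<in> ?s" for P'
        using sh that unfolding gain_hyp_def i_def j_def by auto
      show False
      proof (cases "(i,j) \<in> comp_rel {1..n} (edge_adj ends S)")
        case True
        have "pot ends phi (insert e S) (\<lambda>i. (dist P (Q i))\<^sup>2)"
          using P(1) he[OF Ps] unfolding pot_def i_def j_def by auto
        then have "balanced ends phi (insert e S)" by (rule pot_balanced)
        then show False using fl eE eS True unfolding i_def j_def by auto
      next
        case False
        have SV: "\<forall>e\<in>S. fst (ends e) \<in> {1..n} \<and> snd (ends e) \<in> {1..n}"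
          using SE g unfolding gain_graph_def by blast
        define y' where "y' = (\<lambda>v. y v + (if v \<in> compo {1..n} ends S i then 1 else 0))"
        have y': "pot ends phi S y'" unfolding y'_def by (rule pot_shift[OF y SV])
        obtain P' where P': "pot ends phi S (\<lambda>i. (dist P' (Q i))\<^sup>2)"
          "\<forall>i\<in>{1..n}. \<forall>j\<in>{1..n}. (dist P' (Q i))\<^sup>2 - (dist P' (Q j))\<^sup>2 = y' i - y' j"
          using realize[OF inj ai g SE y'] by blast
        have P's: "P' \<in> ?s" using mem_hyps[of P' Q ends phi S] P'(1) by simp
        have "i \<in> compo {1..n} ends S i" unfolding compo_def comp_rel_def by simp
        moreover have "j \<notin> compo {1..n} ends S i" using False unfolding compo_def by simp
        ultimately have "y' i - y' j = y i - y j + 1" unfolding y'_def by simp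
        moreover have "y' i - y' j = phi e" using bspec[OF bspec[OF P'(2) ij(1)] ij(2)] he[OF P's] by simp
        moreover have "y i - y j = phi e" using bspec[OF bspec[OF P(2) ij(1)] ij(2)] he[OF Ps] by simp
        ultimately show False by simp
      qed
    qed
  qed
  moreover have "S \<subseteq> edges_of Q E ends phi ?s" unfolding edges_of_def using SE by auto
  ultimately show ?thesis using L by blast
qed

lemma gen_pos:
  fixes Q :: "nat \<Rightarrow> 'a::euclidean_space"
  assumes inj: "inj_on Q {1..n}" and ai: "\<not> affine_dependent (Q ` {1..n})"
    and g: "gain_graph n E ends"
  shows "general_position_wrt n Q E ends phi"
proof -
  let ?f = "edges_of Q E ends phi" and ?L = "int_lattice Q E ends phi"
  let ?B = "{S. balanced_flat n E ends phi S \<and> flat_rank n ends S \<le> DIM('a)}"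
  have inj': "inj_on ?f ?L"
  proof (rule inj_onI)
    fix s t assume st: "s \<in> ?L" "t \<in> ?L" "?f s = ?f t"
    have "s = (\<Inter>e\<in>?f s. gain_hyp Q ends phi e)" by (rule lattice_repr[OF st(1)])
    also have "\<dots> = (\<Inter>e\<in>?f t. gain_hyp Q ends phi e)" by (simp only: st(3))
    also have "\<dots> = t" by (rule lattice_repr[OF st(2), symmetric])
    finally show "s = t" .
  qed
  have im: "?f ` ?L = ?B"
  proof
    show "?f ` ?L \<subseteq> ?B"
    proof
      fix S assume "S \<in> ?f ` ?L"
      then obtain s where s: "s \<in> ?L" "S = ?f s" by blast
      have "balanced_flat n E ends phi S" unfolding s(2) by (rule flat_of_s[OF g s(1)])
      moreover have "flat_rank n ends S \<le> DIM('a)"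
        unfolding flat_rank_def by (rule rank_le[OF inj ai])
      ultimately show "S \<in> ?B" by simp
    qed
  next
    show "?B \<subseteq> ?f ` ?L"
    proof
      fix S assume "S \<in> ?B"
      then have "balanced_flat n E ends phi S" by simp
      note h = s_of_flat[OF inj ai g this]
      show "S \<in> ?f ` ?L" by (rule image_eqI[where f="?f" and x="\<Inter>e\<in>S. gain_hyp Q ends phi e", OF conjunct2[OF h, symmetric] conjunct1[OF h]])
    qed
  qed
  have ord: "\<forall>s\<in>?L. \<forall>t\<in>?L. t \<subseteq> s \<longleftrightarrow> ?f s \<subseteq> ?f t"
  proof (intro ballI iffI)
    fix s t assume "s \<in> ?L" "t \<in> ?L" "t \<subseteq> s"
    then show "?f s \<subseteq> ?f t" unfolding edges_of_def by auto
  next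
    fix s t assume st: "s \<in> ?L" "t \<in> ?L" "?f s \<subseteq> ?f t"
    have "t = (\<Inter>e\<in>?f t. gain_hyp Q ends phi e)" by (rule lattice_repr[OF st(2)])
    also have "\<dots> \<subseteq> (\<Inter>e\<in>?f s. gain_hyp Q ends phi e)" using st(3) by auto
    also have "\<dots> = s" by (rule lattice_repr[OF st(1), symmetric])
    finally show "t \<subseteq> s" .
  qed
  show ?thesis unfolding general_position_wrt_def bij_betw_def using inj' im ord by (intro conjI)
qed

lemma merge_rel:
  assumes sB: "sym B"
  shows "(x,y) \<in> (insert (i,j) (insert (j,i) B))\<^sup>* \<longleftrightarrow>
         (x,y) \<in> B\<^sup>* \<or> (((x,i) \<in> B\<^sup>* \<or> (x,j) \<in> B\<^sup>*) \<and> ((i,y) \<in> B\<^sup>* \<or> (j,y) \<in> B\<^sup>*))"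
    (is "?L \<longleftrightarrow> ?R x y")
proof
  have sR: "sym (B\<^sup>*)" by (rule sym_rtrancl[OF sB])
  have tR: "trans (B\<^sup>*)" by (rule trans_rtrancl)
  have sy: "(b,a) \<in> B\<^sup>*" if "(a,b) \<in> B\<^sup>*" for a b using symD[OF sR that] .
  have tr: "(a,c) \<in> B\<^sup>*" if "(a,b) \<in> B\<^sup>*" "(b,c) \<in> B\<^sup>*" for a b c using transD[OF tR that] .
  assume ?L
  then show "?R x y"
  proof (induction rule: rtrancl_induct)
    case base then show ?case by simp
  next
    case (step y z)
    from step(2) consider "(y,z) = (i,j)" | "(y,z) = (j,i)" | "(y,z) \<in> B" by blast
    then show ?case
    proof cases
      case 1 then show ?thesis using step(3) sy tr by blast
    next
      case 2 then show ?thesis using step(3) sy tr by blast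
    next
      case 3
      then have yz: "(y,z) \<in> B\<^sup>*" by blast
      show ?thesis using step(3) yz tr by blast
    qed
  qed
next
  let ?S = "insert (i,j) (insert (j,i) B)"
  have sub: "B\<^sup>* \<subseteq> ?S\<^sup>*" by (rule rtrancl_mono) blast
  have ij: "(i,j) \<in> ?S\<^sup>*" "(j,i) \<in> ?S\<^sup>*" by auto
  assume "?R x y"
  then show ?L
  proof
    assume "(x,y) \<in> B\<^sup>*" then show ?L using sub by blast
  next
    assume h: "((x,i) \<in> B\<^sup>* \<or> (x,j) \<in> B\<^sup>*) \<and> ((i,y) \<in> B\<^sup>* \<or> (j,y) \<in> B\<^sup>*)"
    have tS: "(a,c) \<in> ?S\<^sup>*" if "(a,b) \<in> ?S\<^sup>*" "(b,c) \<in> ?S\<^sup>*" for a b c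
      using that by (rule rtrancl_trans)
    from h show ?L using sub ij tS by blast
  qed
qed

lemma merge_card:
  assumes sB: "sym B" and fV: "finite V" and i: "i \<in> V" and j: "j \<in> V"
    and nij: "(i,j) \<notin> B\<^sup>*"
  shows "card (V // (insert (i,j) (insert (j,i) B))\<^sup>*) + 1 = card (V // B\<^sup>*)"
proof -
  let ?R = "B\<^sup>*" and ?R' = "(insert (i,j) (insert (j,i) B))\<^sup>*"
  have sR: "sym ?R" by (rule sym_rtrancl[OF sB])
  have tR: "trans ?R" by (rule trans_rtrancl)
  have sy: "(b,a) \<in> ?R" if "(a,b) \<in> ?R" for a b using symD[OF sR that] .
  have tr: "(a,c) \<in> ?R" if "(a,b) \<in> ?R" "(b,c) \<in> ?R" for a b c using transD[OF tR that] .
  define Ci where "Ci = ?R``{i}"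
  define Cj where "Cj = ?R``{j}"
  define W where "W = (\<lambda>x. ?R``{x}) ` (V - (Ci \<union> Cj))"
  have cls: "?R``{x} = ?R``{y}" if "(x,y) \<in> ?R" for x y
    using that sy tr by blast
  have notW: "C \<notin> W" if "i \<in> C \<or> j \<in> C" "C \<subseteq> Ci \<union> Cj" for C
  proof
    assume "C \<in> W"
    then obtain x where x: "x \<in> V - (Ci \<union> Cj)" "C = ?R``{x}" unfolding W_def by blast
    have "x \<in> C" using x(2) by blast
    then show False using x(1) that(2) by blast
  qed
  have iCi: "i \<in> Ci" and jCj: "j \<in> Cj" unfolding Ci_def Cj_def by blast+
  have ne: "Ci \<noteq> Cj" using nij jCj unfolding Ci_def Cj_def by blast
  have jnCi: "j \<notin> Ci" using nij unfolding Ci_def by blast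
  have fW: "finite W" unfolding W_def using fV by simp
  have q1: "V // ?R = insert Ci (insert Cj W)"
  proof -
    have "V // ?R = (\<lambda>x. ?R``{x}) ` V" by (rule quotient_image)
    also have "\<dots> = insert Ci (insert Cj W)"
    proof
      show "(\<lambda>x. ?R``{x}) ` V \<subseteq> insert Ci (insert Cj W)"
      proof
        fix C assume "C \<in> (\<lambda>x. ?R``{x}) ` V"
        then obtain x where x: "x \<in> V" "C = ?R``{x}" by blast
        show "C \<in> insert Ci (insert Cj W)"
        proof (cases "x \<in> Ci \<union> Cj")
          case True
          then have "(x,i) \<in> ?R \<or> (x,j) \<in> ?R" unfolding Ci_def Cj_def using sy by blast
          then have "C = Ci \<or> C = Cj" unfolding x(2) Ci_def Cj_def using cls by blast
          then show ?thesis by blast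
        next
          case False then show ?thesis unfolding W_def using x by blast
        qed
      qed
    next
      show "insert Ci (insert Cj W) \<subseteq> (\<lambda>x. ?R``{x}) ` V"
        unfolding W_def Ci_def Cj_def using i j by blast
    qed
    finally show ?thesis .
  qed
  have q2: "V // ?R' = insert (Ci \<union> Cj) W"
  proof -
    have cl': "?R'``{x} = (if x \<in> Ci \<union> Cj then Ci \<union> Cj else ?R``{x})" for x
    proof (cases "x \<in> Ci \<union> Cj")
      case True
      then have xij: "(x,i) \<in> ?R \<or> (x,j) \<in> ?R" unfolding Ci_def Cj_def using sy by blast
      have "?R'``{x} = Ci \<union> Cj"
      proof
        show "?R'``{x} \<subseteq> Ci \<union> Cj"
        proof
          fix y assume "y \<in> ?R'``{x}"
          then have "(x,y) \<in> ?R'" by blast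
          then have "(x,y) \<in> ?R \<or> ((i,y) \<in> ?R \<or> (j,y) \<in> ?R)" using merge_rel[OF sB] by blast
          then show "y \<in> Ci \<union> Cj" using True unfolding Ci_def Cj_def using sy tr by blast
        qed
      next
        show "Ci \<union> Cj \<subseteq> ?R'``{x}"
        proof
          fix y assume "y \<in> Ci \<union> Cj"
          then have "(i,y) \<in> ?R \<or> (j,y) \<in> ?R" unfolding Ci_def Cj_def by blast
          then have "(x,y) \<in> ?R'" using merge_rel[OF sB, of x y i j] xij by blast
          then show "y \<in> ?R'``{x}" by blast
        qed
      qed
      then show ?thesis using True by simp
    next
      case False
      then have xij: "(x,i) \<notin> ?R" "(x,j) \<notin> ?R" unfolding Ci_def Cj_def using sy by blast+
      have "?R'``{x} = ?R``{x}"
        using merge_rel[OF sB, of x _ i j] xij by blast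
      then show ?thesis using False by simp
    qed
    have "V // ?R' = (\<lambda>x. ?R'``{x}) ` V" by (rule quotient_image)
    also have "\<dots> = insert (Ci \<union> Cj) W"
    proof
      show "(\<lambda>x. ?R'``{x}) ` V \<subseteq> insert (Ci \<union> Cj) W"
        unfolding W_def using cl' by auto
    next
      have "Ci \<union> Cj = ?R'``{i}" using cl' iCi by simp
      then show "insert (Ci \<union> Cj) W \<subseteq> (\<lambda>x. ?R'``{x}) ` V"
        unfolding W_def using cl' i by auto
    qed
    finally show ?thesis .
  qed
  have a1: "Ci \<notin> W" using notW[of Ci] iCi by blast
  have a2: "Cj \<notin> W" using notW[of Cj] jCj by blast
  have a3: "Ci \<union> Cj \<notin> W" using notW[of "Ci \<union> Cj"] iCi by blast
  have "card (V // ?R) = card W + 2" unfolding q1 using fW a1 a2 ne by simp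
  moreover have "card (V // ?R') = card W + 1" unfolding q2 using fW a3 by simp
  ultimately show ?thesis by simp
qed

definition baseT :: "nat \<Rightarrow> nat set set \<Rightarrow> (nat \<times> nat) set" where
  "baseT n T = {(u,v). u \<in> {1..n} \<and> v \<in> {1..n} \<and> ({u,v} \<in> T \<or> {v,u} \<in> T)}"

lemma comp_rel_T: "comp_rel {1..n} (\<lambda>u v. {u,v} \<in> T) = (baseT n T)\<^sup>*"
  unfolding comp_rel_def baseT_def by simp

lemma sym_baseT: "sym (baseT n T)"
  unfolding baseT_def sym_def by auto

definition DT :: "(nat \<Rightarrow> 'a::euclidean_space) \<Rightarrow> nat set set \<Rightarrow> 'a set" where
  "DT Q T = {Q i - Q j | i j. {i,j} \<in> T}"

lemma span_DT:
  assumes "(u,w) \<in> (baseT n T)\<^sup>*"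
  shows "Q u - Q w \<in> span (DT Q T)"
  using assms
proof (induction rule: rtrancl_induct)
  case base then show ?case by (simp add: span_zero)
next
  case (step w z)
  then have "{w,z} \<in> T" unfolding baseT_def by (auto simp: insert_commute)
  then have "Q w - Q z \<in> DT Q T" unfolding DT_def by blast
  then have "Q w - Q z \<in> span (DT Q T)" by (rule span_base)
  from span_add[OF step(3) this] show ?case by simp
qed

lemma not_span_DT:
  fixes Q :: "nat \<Rightarrow> 'a::euclidean_space"
  assumes inj: "inj_on Q {1..n}" and ai: "\<not> affine_dependent (Q ` {1..n})"
    and T: "T \<subseteq> unordered_pairs n" and i: "i \<in> {1..n}" and j: "j \<in> {1..n}"
    and nij: "(i,j) \<notin> (baseT n T)\<^sup>*"
  shows "Q i - Q j \<notin> span (DT Q T)"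
proof
  let ?R = "(baseT n T)\<^sup>*"
  define y where "y = (\<lambda>k. if (i,k) \<in> ?R then 1 else (0::real))"
  obtain P where P: "\<forall>k\<in>{1..n}. P \<bullet> (Q k - Q i) = y k - y i"
    using lin_sol[OF inj ai i, of y] by blast
  have orth: "orthogonal P d" if d: "d \<in> DT Q T" for d
  proof -
    obtain a b where ab: "d = Q a - Q b" "{a,b} \<in> T" using d unfolding DT_def by blast
    have abV: "a \<in> {1..n}" "b \<in> {1..n}" using ab(2) T unfolding unordered_pairs_def
      by (auto simp: doubleton_eq_iff)
    have "(a,b) \<in> baseT n T" using abV ab(2) unfolding baseT_def by simp
    then have "(a,b) \<in> ?R" "(b,a) \<in> ?R" using symD[OF sym_baseT] by blast+
    then have "y a = y b" unfolding y_def using rtrancl_trans by metis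
    have "P \<bullet> d = P \<bullet> (Q a - Q i) - P \<bullet> (Q b - Q i)" unfolding ab(1) by (simp add: inner_diff_right)
    also have "\<dots> = (y a - y i) - (y b - y i)" using bspec[OF P abV(1)] bspec[OF P abV(2)] by simp
    also have "\<dots> = 0" using \<open>y a = y b\<close> by simp
    finally show ?thesis unfolding orthogonal_def .
  qed
  assume "Q i - Q j \<in> span (DT Q T)"
  then have "orthogonal P (Q i - Q j)" using orthogonal_to_span orth by blast
  moreover have "P \<bullet> (Q i - Q j) = - (P \<bullet> (Q j - Q i))" by (simp add: inner_diff_right)
  moreover have "P \<bullet> (Q j - Q i) = y j - y i" using bspec[OF P j] .
  moreover have "y j = 0" "y i = 1" using nij unfolding y_def by auto
  ultimately show False unfolding orthogonal_def by simp
qed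

lemma quotient_Id_card: "finite V \<Longrightarrow> card (V // Id) = card V"
  unfolding quotient_image by (simp add: card_image inj_on_def)

lemma dimT:
  fixes Q :: "nat \<Rightarrow> 'a::euclidean_space"
  assumes inj: "inj_on Q {1..n}" and ai: "\<not> affine_dependent (Q ` {1..n})"
    and fT: "finite T" and T: "T \<subseteq> unordered_pairs n"
  shows "dim (DT Q T) + card ({1..n} // (baseT n T)\<^sup>*) = n"
  using fT T
proof (induction T rule: finite_induct)
  case empty
  have "DT Q {} = {}" unfolding DT_def by simp
  moreover have "baseT n {} = {}" unfolding baseT_def by simp
  ultimately show ?case using quotient_Id_card[of "{1..n}"] by simp
next
  case (insert p T)
  obtain i j where ij: "i \<in> {1..n}" "j \<in> {1..n}" "i \<noteq> j" "p = {i,j}"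
    using insert.prems unfolding unordered_pairs_def by blast
  have IH: "dim (DT Q T) + card ({1..n} // (baseT n T)\<^sup>*) = n" using insert by simp
  let ?v = "Q i - Q j" and ?w = "Q j - Q i"
  have D: "DT Q (insert p T) = insert ?v (insert ?w (DT Q T))"
    unfolding DT_def ij(4) by (auto simp: doubleton_eq_iff)
  have B: "baseT n (insert p T) = insert (i,j) (insert (j,i) (baseT n T))"
    unfolding baseT_def ij(4) using ij(1,2) by (auto simp: doubleton_eq_iff)
  have "?v \<in> span (insert ?w (DT Q T))"
  proof -
    have "?w \<in> span (insert ?w (DT Q T))" by (rule span_base) simp
    from span_neg[OF this] show ?thesis by simp
  qed
  then have dD: "dim (DT Q (insert p T)) = dim (insert ?w (DT Q T))"
    unfolding D by (simp add: dim_insert)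
  show ?case
  proof (cases "(i,j) \<in> (baseT n T)\<^sup>*")
    case True
    have ji: "(j,i) \<in> (baseT n T)\<^sup>*" by (rule symD[OF sym_rtrancl[OF sym_baseT] True])
    have "?w \<in> span (DT Q T)" by (rule span_DT[OF ji])
    then have "dim (DT Q (insert p T)) = dim (DT Q T)" unfolding dD by (simp add: dim_insert)
    moreover have "(baseT n (insert p T))\<^sup>* = (baseT n T)\<^sup>*"
      unfolding B by (rule rtrancl_subset) (use True ji in auto)
    ultimately show ?thesis using IH by simp
  next
    case False
    have ji: "(j,i) \<notin> (baseT n T)\<^sup>*"
      using False symD[OF sym_rtrancl[OF sym_baseT]] by blast
    have "?w \<notin> span (DT Q T)"
      by (rule not_span_DT[OF inj ai _ ij(2) ij(1) ji]) (use insert.prems in auto)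
    then have "dim (DT Q (insert p T)) = dim (DT Q T) + 1" unfolding dD by (simp add: dim_insert)
    moreover have "card ({1..n} // (baseT n (insert p T))\<^sup>*) + 1 = card ({1..n} // (baseT n T)\<^sup>*)"
      unfolding B by (rule merge_card[OF sym_baseT _ ij(1) ij(2) False]) simp
    ultimately show ?thesis using IH by simp
  qed
qed

lemma ideal_gp:
  fixes Q :: "nat \<Rightarrow> 'a::euclidean_space"
  assumes inj: "inj_on Q {1..n}" and ai: "\<not> affine_dependent (Q ` {1..n})"
  shows "ideal_general_position n Q"
  unfolding ideal_general_position_def
proof (intro conjI allI impI)
  show "inj_on Q {1..n}" by (rule inj)
next
  fix T assume T: "T \<subseteq> unordered_pairs n"
  have "unordered_pairs n \<subseteq> Pow {1..n}" unfolding unordered_pairs_def by auto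
  then have fT: "finite T" using T by (meson finite_Pow_iff finite_atLeastAtMost finite_subset)
  have e: "dim (DT Q T) + num_comp {1..n} (\<lambda>u v. {u,v} \<in> T) = n"
    unfolding num_comp_def comp_rel_T by (rule dimT[OF inj ai fT T])
  have "n - num_comp {1..n} (\<lambda>u v. {u,v} \<in> T) \<le> DIM('a)" by (rule rank_le[OF inj ai])
  then show "dim {Q i - Q j |i j. {i, j} \<in> T} = min (n - num_comp {1..n} (\<lambda>u v. {u, v} \<in> T)) DIM('a)"
    using e unfolding DT_def by simp
qed

theorem proposition6p9:
  fixes n :: nat and Q :: "nat \<Rightarrow> 'a::euclidean_space"
  assumes "inj_on Q {1..n}" and "\<not> affine_dependent (Q ` {1..n})"
  shows "ideal_general_position n Q \<and>
         (\<forall>(E::'e set) ends phi. gain_graph n E ends \<longrightarrow> general_position_wrt n Q E ends phi)"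
proof -
  have "ideal_general_position n Q" by (rule ideal_gp[OF assms])
  moreover have "\<forall>(E::'e set) ends phi. gain_graph n E ends \<longrightarrow> general_position_wrt n Q E ends phi"
  proof (intro allI impI)
    fix E :: "'e set" and ends and phi
    assume "gain_graph n E ends"
    then show "general_position_wrt n Q E ends phi" by (rule gen_pos[OF assms])
  qed
  ultimately show ?thesis by (rule conjI)
qed

end
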